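(* Let $x_s<x_t$ be integers, let $C\ge 0$, and let $f:[x_s,x_t]\to\mathbb{R}$ be such that $([x_s,x_t],f)$ is an Ameso($C$) pair. Suppose there exist $x^0\in[x_s,x_t]$ and positive integers $b_1,b_2$ with $[x^0-b_2,x^0+b_1]\subseteq[x_s,x_t]$ such that $f(x^0)=\min_{y\in[x^0-b_2,x^0+b_1]}f(y)$, $f(x^0)+C\le\max_{y\in[x^0,x^0+b_1]}f(y)$, and $f(x^0)+C\le\max_{y\in[x^0-b_2,x^0]}f(y)$. Then $f(x^0)=\min_{y\in[x_s,x_t]}f(y)$.
   Context: For integers $a\le b$, $[a,b]$ denotes the set of integers $\{a,a+1,\dots,b\}$. Floors and ceilings of vectors are taken componentwise. A set $D^n\subseteq\mathbb{Z}^n$ is an Ameso set if $\lceil(\vec x+\vec y)/2\rceil,\lfloor(\vec x+\vec y)/2\rfloor\in D^n$ for all $\vec x,\vec y\in D^n$. For $C\ge 0$, $(D^n,f)$ is an Ameso($C$) pair if $D^n$ is an Ameso set, $f:D^n\to\mathbb{R}$ is bounded below, and $f(\vec x)+f(\vec y)+C\ge f(\lceil(\vec x+\vec y)/2\rceil)+f(\lfloor(\vec x+\vec y)/2\rfloor)$ for all $\vec x,\vec y\in D^n$. *)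

theory Defs
  imports "HOL-Analysis.Analysis"
begin

text \<open>One-dimensional instance (n = 1) of the Ameso notions: points are integers,
  midpoints are ceiling/floor of (x+y)/2.\<close>

definition ameso_set :: "int set \<Rightarrow> bool" where
  "ameso_set D \<longleftrightarrow> (\<forall>x\<in>D. \<forall>y\<in>D.
      \<lceil>real_of_int (x + y) / 2\<rceil> \<in> D \<and> \<lfloor>real_of_int (x + y) / 2\<rfloor> \<in> D)"

definition ameso_pair :: "real \<Rightarrow> int set \<Rightarrow> (int \<Rightarrow> real) \<Rightarrow> bool" where
  "ameso_pair C D f \<longleftrightarrow> ameso_set D \<and> (\<exists>m. \<forall>x\<in>D. m \<le> f x) \<and>
     (\<forall>x\<in>D. \<forall>y\<in>D. f x + f y + C \<ge>
        f \<lceil>real_of_int (x + y) / 2\<rceil> + f \<lfloor>real_of_int (x + y) / 2\<rfloor>)"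

end

theory Submission
  imports Defs
begin

lemma core:
  fixes a z u :: int and C :: real and f :: "int \<Rightarrow> real"
  assumes az: "a < z" and C: "C \<ge> 0"
    and H: "\<And>p q. p \<in> {a..z} \<Longrightarrow> q \<in> {a..z} \<Longrightarrow> even (p + q) \<Longrightarrow>
              2 * f ((p + q) div 2) \<le> f p + f q + C"
    and fz: "f z < f a" and u: "a < u" "u < z" and fu: "f u \<ge> f a + C"
  shows False
proof -
  define S where "S = {a<..<z}"
  have finS: "finite S" and uS: "u \<in> S" using u by (auto simp: S_def)
  define M where "M = Max (f ` S)"
  have MS: "M \<in> f ` S" unfolding M_def using finS uS by (intro Max_in) auto
  have Mge: "\<And>x. x \<in> S \<Longrightarrow> f x \<le> M" unfolding M_def using finS by auto
  have Mbig: "M \<ge> f a + C" using Mge[OF uS] fu by linarith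
  define Y where "Y = {y\<in>S. f y = M}"
  have finY: "finite Y" using finS by (auto simp: Y_def)
  have Yne: "Y \<noteq> {}" using MS by (auto simp: Y_def)
  define y where "y = Max Y"
  have yY: "y \<in> Y" unfolding y_def using finY Yne by (rule Max_in)
  have ymax: "\<And>x. x \<in> Y \<Longrightarrow> x \<le> y" unfolding y_def using finY by auto
  have yS: "a < y" "y < z" and fy: "f y = M" using yY by (auto simp: Y_def S_def)
  show False
  proof (cases "2 * y - a \<le> z")
    case True
    define b where "b = 2 * y - a"
    have "2 * f ((a + b) div 2) \<le> f a + f b + C"
      using H[of a b] True yS by (auto simp: b_def)
    moreover have "(a + b) div 2 = y" by (simp add: b_def)
    ultimately have fb: "f b \<ge> 2 * M - f a - C" using fy by simp
    show False
    proof (cases "b = z")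
      case True then show ?thesis using fb[unfolded True] fz Mbig C by linarith
    next
      case False
      then have "b \<in> S" using \<open>2 * y - a \<le> z\<close> yS by (auto simp: S_def b_def)
      then have "f b \<le> M" by (rule Mge)
      then have "f b = M" using fb Mbig by linarith
      then have "b \<in> Y" using \<open>b \<in> S\<close> by (simp add: Y_def)
      then have "b \<le> y" by (rule ymax)
      then show False using yS by (simp add: b_def)
    qed
  next
    case False
    define c where "c = 2 * y - z"
    have "2 * f ((c + z) div 2) \<le> f c + f z + C"
      using H[of c z] False yS by (auto simp: c_def)
    moreover have "(c + z) div 2 = y" by (simp add: c_def)
    ultimately have fc: "f c \<ge> 2 * M - f z - C" using fy by simp
    have "c \<in> S" using False yS by (auto simp: S_def c_def)
    then have "f c \<le> M" by (rule Mge)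
    then show False using fc fz Mbig by linarith
  qed
qed

lemma midH:
  assumes "ameso_pair C D f" "p \<in> D" "q \<in> D" "even (p + q)"
  shows "2 * f ((p + q) div 2) \<le> f p + f q + C"
proof -
  obtain k where k: "p + q = 2 * k" using assms(4) unfolding dvd_def by blast
  have e: "real_of_int (p + q) / 2 = real_of_int k" using k by simp
  have "f \<lceil>real_of_int (p + q) / 2\<rceil> + f \<lfloor>real_of_int (p + q) / 2\<rfloor> \<le> f p + f q + C"
    using assms(1-3) unfolding ameso_pair_def by blast
  then show ?thesis using k by (simp add: e)
qed

theorem theorem3:
  fixes xs xt x0 b1 b2 :: int and C :: real and f :: "int \<Rightarrow> real"
  assumes "xs < xt" and "C \<ge> 0"
    and "ameso_pair C {xs..xt} f"
    and "x0 \<in> {xs..xt}" and "b1 > 0" and "b2 > 0"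
    and "{x0 - b2..x0 + b1} \<subseteq> {xs..xt}"
    and "f x0 = Min (f ` {x0 - b2..x0 + b1})"
    and "f x0 + C \<le> Max (f ` {x0..x0 + b1})"
    and "f x0 + C \<le> Max (f ` {x0 - b2..x0})"
  shows "f x0 = Min (f ` {xs..xt})"
proof -
  have wmin: "\<And>w. w \<in> {x0 - b2..x0 + b1} \<Longrightarrow> f x0 \<le> f w"
    using assms(8) by (metis Min_le finite_atLeastAtMost_int finite_imageI image_eqI)
  have H: "\<And>p q. p \<in> {xs..xt} \<Longrightarrow> q \<in> {xs..xt} \<Longrightarrow> even (p + q) \<Longrightarrow>
              2 * f ((p + q) div 2) \<le> f p + f q + C"
    using midH[OF assms(3)] by blast
  obtain r where r: "r \<in> {x0..x0 + b1}" "f r \<ge> f x0 + C"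
  proof -
    have "Max (f ` {x0..x0 + b1}) \<in> f ` {x0..x0 + b1}"
      using assms(5) by (intro Max_in) auto
    then show ?thesis using that assms(9) by auto
  qed
  obtain r' where r': "r' \<in> {x0 + 1..x0 + b1}" "f r' \<ge> f x0 + C"
  proof (cases "r = x0")
    case True
    then have "C = 0" using r assms(2) by simp
    moreover have "f x0 \<le> f (x0 + 1)" using wmin assms(5,6) by auto
    ultimately show ?thesis using that[of "x0 + 1"] assms(5) by auto
  next
    case False then show ?thesis using r by (intro that[of r]) auto
  qed
  obtain l where l: "l \<in> {x0 - b2..x0}" "f l \<ge> f x0 + C"
  proof -
    have "Max (f ` {x0 - b2..x0}) \<in> f ` {x0 - b2..x0}"
      using assms(6) by (intro Max_in) auto
    then show ?thesis using that assms(10) by auto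
  qed
  obtain l' where l': "l' \<in> {x0 - b2..x0 - 1}" "f l' \<ge> f x0 + C"
  proof (cases "l = x0")
    case True
    then have "C = 0" using l assms(2) by simp
    moreover have "f x0 \<le> f (x0 - 1)" using wmin assms(5,6) by auto
    ultimately show ?thesis using that[of "x0 - 1"] assms(6) by auto
  next
    case False then show ?thesis using l by (intro that[of l]) auto
  qed
  have ge: "f x0 \<le> f w" if w: "w \<in> {xs..xt}" for w
  proof (rule ccontr)
    assume lt: "\<not> f x0 \<le> f w"
    consider "w \<in> {x0 - b2..x0 + b1}" | "w > x0 + b1" | "w < x0 - b2" by fastforce
    then show False
    proof cases
      case 1 then show ?thesis using wmin lt by auto
    next
      case 2
      show False
      proof (rule core[of x0 w C f r'])
        show "\<And>p q. p \<in> {x0..w} \<Longrightarrow> q \<in> {x0..w} \<Longrightarrow> even (p + q) \<Longrightarrow>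
              2 * f ((p + q) div 2) \<le> f p + f q + C"
          using H assms(4) w by auto
      qed (use 2 lt r' assms(2) in auto)
    next
      case 3
      define g where "g = (\<lambda>x. f (- x))"
      show False
      proof (rule core[of "- x0" "- w" C g "- l'"])
        fix p q assume pq: "p \<in> {- x0..- w}" "q \<in> {- x0..- w}" "even (p + q)"
        have "2 * f ((- p + - q) div 2) \<le> f (- p) + f (- q) + C"
          using H[of "- p" "- q"] pq assms(4) w by auto
        moreover have "(- p + - q) div 2 = - ((p + q) div 2)" using pq(3) unfolding dvd_def by (metis minus_add_distrib mult_minus_right nonzero_mult_div_cancel_left zero_neq_numeral)
        ultimately show "2 * g ((p + q) div 2) \<le> g p + g q + C" by (simp add: g_def)
      qed (use 3 lt l' assms(2) in \<open>auto simp: g_def\<close>)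
    qed
  qed
  show ?thesis
    by (rule Min_eqI[symmetric]) (use ge assms(4) in auto)
qed

end
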